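(* Fix $w>0$ and $\rho\in(-1,1)$. Let $(x_j,y_j)$, $j=1,\dots,k$, be i.i.d. pairs from the bivariate normal distribution with mean $(0,0)$, unit variances and correlation $\rho$. Code each real number $t$ by $c(t)=0$ if $t\le -w$, $c(t)=1$ if $-w<t\le 0$, $c(t)=2$ if $0<t\le w$, $c(t)=3$ if $t>w$. For $i,j\in\{0,1,2,3\}$ let $k_{i,j}$ be the number of indices $j'$ with $(c(x_{j'}),c(y_{j'}))=(i,j)$, let $P_{i,j}(\rho,w)=\Pr(c(x)=i,\,c(y)=j)$ for one such pair $(x,y)$, and let $l(\rho,w)=\sum_{i,j}k_{i,j}\log P_{i,j}(\rho,w)$ be the log-likelihood. Define $P_{2,2}(\rho,w)=\Pr(0<x\le w,\ 0<y\le w)$, $P_{2,3}(\rho,w)=\Pr(x>w,\ 0<y\le w)$, $P_{3,3}(\rho,w)=\Pr(x>w,\ y>w)$, and write $P'_{a,b}(\rho,w)=\frac{\partial}{\partial\rho}P_{a,b}(\rho,w)$ (so $P'_{a,b}(-\rho,w)$ denotes this derivative evaluated at $-\rho$). Then the Fisher information $I_{2,\rho,w}=-E\left[\frac{\partial^2}{\partial\rho^2}l(\rho,w)\right]$ equals $$I_{2,\rho,w}=2k\,A,$$ where $$A=\frac{(P_{2,2}'(\rho,w))^2}{P_{2,2}(\rho,w)}+2\frac{(P_{2,3}'(\rho,w))^2}{P_{2,3}(\rho,w)}+\frac{(P_{3,3}'(\rho,w))^2}{P_{3,3}(\rho,w)}+\frac{(P_{2,2}'(-\rho,w))^2}{P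_{2,2}(-\rho,w)}+2\frac{(P_{2,3}'(-\rho,w))^2}{P_{2,3}(-\rho,w)}+\frac{(P_{3,3}'(-\rho,w))^2}{P_{3,3}(-\rho,w)}.$$
   Context: This is the "2-bit random projection" model: $(x,y)$ arise as projections $x=\sum_i u_ir_i$, $y=\sum_i v_ir_i$ of unit-norm vectors $u,v$ with correlation $\rho=\sum_i u_iv_i$ onto i.i.d. $N(0,1)$ entries $r_i$, and each projection is quantized into 2 bits by the thresholds $-w,0,w$. The Fisher information governs the asymptotic variance $1/I_{2,\rho,w}+O(1/k^2)$ of the maximum likelihood estimator of $\rho$ based on the counts $k_{i,j}$. *)

theory Defs
  imports "HOL-Probability.Probability"
begin

definition bvn_pdf :: "real \<Rightarrow> real \<times> real \<Rightarrow> real" where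
  "bvn_pdf rho z = exp (- ((fst z)\<^sup>2 - 2 * rho * fst z * snd z + (snd z)\<^sup>2) / (2 * (1 - rho\<^sup>2)))
                     / (2 * pi * sqrt (1 - rho\<^sup>2))"

definition bvn :: "real \<Rightarrow> (real \<times> real) measure" where
  "bvn rho = density lborel (\<lambda>z. ennreal (bvn_pdf rho z))"

definition code2 :: "real \<Rightarrow> real \<Rightarrow> nat" where
  "code2 w t = (if t \<le> - w then 0 else if t \<le> 0 then 1 else if t \<le> w then 2 else 3)"

definition Pcell :: "nat \<Rightarrow> nat \<Rightarrow> real \<Rightarrow> real \<Rightarrow> real" where
  "Pcell i j rho w = measure (bvn rho) {z. code2 w (fst z) = i \<and> code2 w (snd z) = j}"

definition P22 :: "real \<Rightarrow> real \<Rightarrow> real" where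
  "P22 rho w = measure (bvn rho) {z. 0 < fst z \<and> fst z \<le> w \<and> 0 < snd z \<and> snd z \<le> w}"

definition P23 :: "real \<Rightarrow> real \<Rightarrow> real" where
  "P23 rho w = measure (bvn rho) {z. fst z > w \<and> 0 < snd z \<and> snd z \<le> w}"

definition P33 :: "real \<Rightarrow> real \<Rightarrow> real" where
  "P33 rho w = measure (bvn rho) {z. fst z > w \<and> snd z > w}"

definition sample :: "nat \<Rightarrow> real \<Rightarrow> (nat \<Rightarrow> real \<times> real) measure" where
  "sample k rho = PiM {..<k} (\<lambda>_. bvn rho)"

definition cnt :: "real \<Rightarrow> nat \<Rightarrow> nat \<Rightarrow> nat \<Rightarrow> (nat \<Rightarrow> real \<times> real) \<Rightarrow> nat" where
  "cnt w k i j \<omega> = card {m \<in> {..<k}. code2 w (fst (\<omega> m)) = i \<and> code2 w (snd (\<omega> m)) = j}"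

definition loglik :: "real \<Rightarrow> nat \<Rightarrow> (nat \<Rightarrow> real \<times> real) \<Rightarrow> real \<Rightarrow> real" where
  "loglik w k \<omega> rho = (\<Sum>i\<in>{0..3}. \<Sum>j\<in>{0..3}. real (cnt w k i j \<omega>) * ln (Pcell i j rho w))"

definition fisher2 :: "nat \<Rightarrow> real \<Rightarrow> real \<Rightarrow> real" where
  "fisher2 k rho w = - (\<integral>\<omega>. deriv (deriv (loglik w k \<omega>)) rho \<partial>sample k rho)"

end

theory Submission
  imports Defs
begin
lemma deriv_integral:
  fixes f f' :: "real \<Rightarrow> 'a \<Rightarrow> real" and g :: "'a \<Rightarrow> real"
  assumes r0: "a < r0" "r0 < b"
  and int: "\<And>r. r \<in> {a<..<b} \<Longrightarrow> integrable M (f r)"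
  and meas: "\<And>r. r \<in> {a<..<b} \<Longrightarrow> f' r \<in> borel_measurable M"
  and der: "\<And>r x. r \<in> {a<..<b} \<Longrightarrow> x \<in> space M \<Longrightarrow> ((\<lambda>r. f r x) has_field_derivative f' r x) (at r)"
  and bnd: "\<And>r x. r \<in> {a<..<b} \<Longrightarrow> x \<in> space M \<Longrightarrow> \<bar>f' r x\<bar> \<le> g x"
  and gint: "integrable M g"
  shows "((\<lambda>r. \<integral>x. f r x \<partial>M) has_field_derivative (\<integral>x. f' r0 x \<partial>M)) (at r0)"
proof -
  have op: "open {a<..<b}" by simp
  have r0in: "r0 \<in> {a<..<b}" using r0 by simp
  let ?q = "\<lambda>y x. (f y x - f r0 x) / (y - r0)"
  have "((\<lambda>y. ((\<integral>x. f y x \<partial>M) - (\<integral>x. f r0 x \<partial>M)) / (y - r0)) \<longlongrightarrow> (\<integral>x. f' r0 x \<partial>M)) (at r0 within {a<..<b})"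
  proof (subst tendsto_at_iff_sequentially, intro allI impI)
    fix X :: "nat \<Rightarrow> real" assume XS: "\<forall>i. X i \<in> {a<..<b} - {r0}" and XL: "X \<longlonglongrightarrow> r0"
    have eq: "((\<integral>x. f (X i) x \<partial>M) - (\<integral>x. f r0 x \<partial>M)) / (X i - r0) = (\<integral>x. ?q (X i) x \<partial>M)" for i
      using int[of "X i"] int[OF r0in] XS by simp
    have "(\<lambda>i. \<integral>x. ?q (X i) x \<partial>M) \<longlonglongrightarrow> (\<integral>x. f' r0 x \<partial>M)"
    proof (rule integral_dominated_convergence[where w=g])
      show "f' r0 \<in> borel_measurable M" using meas[OF r0in] .
      show "?q (X i) \<in> borel_measurable M" for i
        using int[of "X i"] int[OF r0in] XS by (intro borel_measurable_divide borel_measurable_diff) auto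
      show "integrable M g" by fact
      show "AE x in M. (\<lambda>i. ?q (X i) x) \<longlonglongrightarrow> f' r0 x"
      proof (rule AE_I2)
        fix x assume x: "x \<in> space M"
        have "((\<lambda>y. ?q y x) \<longlongrightarrow> f' r0 x) (at r0)"
          using der[OF r0in x] by (simp add: has_field_derivative_iff)
        moreover have "filterlim X (at r0) sequentially"
          using XL XS by (intro filterlim_atI) auto
        ultimately show "(\<lambda>i. ?q (X i) x) \<longlonglongrightarrow> f' r0 x"
          by (rule filterlim_compose)
      qed
      show "AE x in M. norm (?q (X i) x) \<le> g x" for i
      proof (rule AE_I2)
        fix x assume x: "x \<in> space M"
        have Xi: "X i \<in> {a<..<b}" "X i \<noteq> r0" using XS by auto
        have mv: "\<bar>f y x - f z x\<bar> \<le> g x * (y - z)" if yz: "z < y" "y \<in> {a<..<b}" "z \<in> {a<..<b}" for y z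
        proof -
          have "\<And>t. z \<le> t \<Longrightarrow> t \<le> y \<Longrightarrow> ((\<lambda>r. f r x) has_real_derivative f' t x) (at t)"
            using yz der x by (metis greaterThanLessThan_iff less_le_trans order_le_less_trans)
          from MVT2[OF yz(1) this] obtain t where t: "z < t" "t < y" "f y x - f z x = (y - z) * f' t x"
            by auto
          have "t \<in> {a<..<b}" using t yz by auto
          with bnd x have "\<bar>f' t x\<bar> \<le> g x" by auto
          then show ?thesis using t yz by (simp add: abs_mult mult.commute mult_right_mono)
        qed
        show "norm (?q (X i) x) \<le> g x"
        proof (cases "X i < r0")
          case True
          have h: "\<bar>f r0 x - f (X i) x\<bar> \<le> g x * (r0 - X i)" using mv[of "X i" r0] True Xi r0in by blast
          with True show ?thesis
            by (simp add: abs_minus_commute divide_le_eq abs_divide mult.commute)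
        next
          case False
          with Xi have "r0 < X i" by auto
          have h: "\<bar>f (X i) x - f r0 x\<bar> \<le> g x * (X i - r0)" using mv[of r0 "X i"] \<open>r0 < X i\<close> Xi r0in by blast
          with \<open>r0 < X i\<close> show ?thesis
            by (simp add: divide_le_eq abs_divide mult.commute)
        qed
      qed
    qed
    then show "((\<lambda>y. ((\<integral>x. f y x \<partial>M) - (\<integral>x. f r0 x \<partial>M)) / (y - r0)) \<circ> X) \<longlonglongrightarrow> (\<integral>x. f' r0 x \<partial>M)"
      by (simp add: o_def eq)
  qed
  then show ?thesis
    using at_within_open[OF r0in op] by (simp add: has_field_derivative_iff)
qed

definition NN :: "real \<times> real \<Rightarrow> real" where "NN z = (fst z)\<^sup>2 + (snd z)\<^sup>2"
definition QQ :: "real \<Rightarrow> real \<times> real \<Rightarrow> real" where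
  "QQ r z = NN z - 2 * r * (fst z * snd z)"
definition AA :: "real \<Rightarrow> real \<times> real \<Rightarrow> real" where
  "AA r z = ((fst z * snd z) * (1 + r\<^sup>2) - r * NN z) / (1 - r\<^sup>2)\<^sup>2 + r / (1 - r\<^sup>2)"
definition AA' :: "real \<Rightarrow> real \<times> real \<Rightarrow> real" where
  "AA' r z = (2 * r * (fst z * snd z) - NN z) / (1 - r\<^sup>2)\<^sup>2
      + 4 * r * ((fst z * snd z) * (1 + r\<^sup>2) - r * NN z) / (1 - r\<^sup>2)^3
      + (1 + r\<^sup>2) / (1 - r\<^sup>2)\<^sup>2"
definition d1 :: "real \<Rightarrow> real \<times> real \<Rightarrow> real" where
  "d1 r z = bvn_pdf r z * AA r z"
definition d2 :: "real \<Rightarrow> real \<times> real \<Rightarrow> real" where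
  "d2 r z = bvn_pdf r z * ((AA r z)\<^sup>2 + AA' r z)"

lemma pdf_alt: "bvn_pdf r z = exp (- QQ r z / (2 * (1 - r\<^sup>2))) / (2 * pi * sqrt (1 - r\<^sup>2))"
  by (simp add: bvn_pdf_def QQ_def NN_def algebra_simps)

lemma s_pos: "\<bar>r::real\<bar> < 1 \<Longrightarrow> 0 < 1 - r\<^sup>2"
  using abs_square_less_1[of r] by auto

lemma AA_deriv:
  assumes "\<bar>r\<bar> < 1"
  shows "((\<lambda>r. AA r z) has_real_derivative AA' r z) (at r)"
proof -
  define p where "p = fst z * snd z"
  define N where "N = NN z"
  have s: "1 - r\<^sup>2 \<noteq> 0" using s_pos[OF assms] by auto
  have d1: "((\<lambda>r. p * (1 + r\<^sup>2) - r * N) has_real_derivative (2 * r * p - N)) (at r)"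
    by (auto intro!: derivative_eq_intros)
  have d2: "((\<lambda>r. (1 - r\<^sup>2)\<^sup>2) has_real_derivative (- 4 * r * (1 - r\<^sup>2))) (at r)"
    by (auto intro!: derivative_eq_intros)
  have d3: "((\<lambda>r. (1 - r\<^sup>2)) has_real_derivative (- 2 * r)) (at r)"
    by (auto intro!: derivative_eq_intros)
  have "((\<lambda>r. (p * (1 + r\<^sup>2) - r * N) / (1 - r\<^sup>2)\<^sup>2 + r / (1 - r\<^sup>2)) has_real_derivative
     (((2 * r * p - N) * (1 - r\<^sup>2)\<^sup>2 - (p * (1 + r\<^sup>2) - r * N) * (- 4 * r * (1 - r\<^sup>2))) / ((1 - r\<^sup>2)\<^sup>2 * (1 - r\<^sup>2)\<^sup>2)
      + (1 * (1 - r\<^sup>2) - r * (- 2 * r)) / ((1 - r\<^sup>2) * (1 - r\<^sup>2)))) (at r)"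
    by (rule DERIV_add[OF DERIV_divide[OF d1 d2] DERIV_divide[OF DERIV_ident d3]]) (use s in auto)
  moreover have "(((2 * r * p - N) * S\<^sup>2 - (p * (1 + r\<^sup>2) - r * N) * (- 4 * r * S)) / (S\<^sup>2 * S\<^sup>2)
      + (1 * S - r * (- 2 * r)) / (S * S)) = (2 * r * p - N) / S\<^sup>2
      + 4 * r * (p * (1 + r\<^sup>2) - r * N) / S^3
      + (1 + r\<^sup>2) / S\<^sup>2" if "S \<noteq> 0" "r\<^sup>2 = 1 - S" for S
    using that by (simp add: field_simps) algebra
  note this[of "1 - r^2", OF s]
  ultimately show ?thesis unfolding AA_def AA'_def p_def[symmetric] N_def[symmetric] using s by simp
qed

lemma pdf_deriv:
  assumes "\<bar>r\<bar> < 1"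
  shows "((\<lambda>r. bvn_pdf r z) has_real_derivative d1 r z) (at r)"
proof -
  define p where "p = fst z * snd z"
  define N where "N = NN z"
  have S: "0 < 1 - r\<^sup>2" using s_pos[OF assms] .
  have s: "1 - r\<^sup>2 \<noteq> 0" using S by auto
  have dq: "((\<lambda>r. - (N - 2 * r * p)) has_real_derivative (2 * p)) (at r)"
    by (auto intro!: derivative_eq_intros)
  have d3: "((\<lambda>r. 2 * (1 - r\<^sup>2)) has_real_derivative (- 4 * r)) (at r)"
    by (auto intro!: derivative_eq_intros)
  have dE0: "((\<lambda>r. - (N - 2 * r * p) / (2 * (1 - r\<^sup>2))) has_real_derivative
     ((2 * p) * (2 * (1 - r\<^sup>2)) - (- (N - 2 * r * p)) * (- 4 * r)) / ((2 * (1 - r\<^sup>2)) * (2 * (1 - r\<^sup>2)))) (at r)"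
    by (rule DERIV_divide[OF dq d3]) (use s in auto)
  have eE: "((2 * p) * (2 * S) - (- (N - 2 * r * p)) * (- 4 * r)) / ((2 * S) * (2 * S))
      = (p * (1 + r\<^sup>2) - r * N) / S\<^sup>2" if "S \<noteq> 0" "r\<^sup>2 = 1 - S" for S
    using that by (simp add: field_simps) algebra
  have dE: "((\<lambda>r. exp (- (N - 2 * r * p) / (2 * (1 - r\<^sup>2)))) has_real_derivative
     exp (- (N - 2 * r * p) / (2 * (1 - r\<^sup>2))) * ((p * (1 + r\<^sup>2) - r * N) / (1 - r\<^sup>2)\<^sup>2)) (at r)"
  proof -
    have e: "((2 * p) * (2 * (1 - r\<^sup>2)) - (- (N - 2 * r * p)) * (- 4 * r)) / ((2 * (1 - r\<^sup>2)) * (2 * (1 - r\<^sup>2)))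
      = (p * (1 + r\<^sup>2) - r * N) / (1 - r\<^sup>2)\<^sup>2" using eE[of "1 - r^2"] s by simp
    show ?thesis using DERIV_chain2[OF DERIV_exp dE0] unfolding e .
  qed
  have d3': "((\<lambda>r. (1 - r\<^sup>2)) has_real_derivative (- 2 * r)) (at r)"
    by (auto intro!: derivative_eq_intros)
  have dsq: "((\<lambda>r. sqrt (1 - r\<^sup>2)) has_real_derivative (inverse (sqrt (1 - r\<^sup>2)) / 2) * (- 2 * r)) (at r)"
    using DERIV_chain2[of sqrt _ "\<lambda>r. 1 - r\<^sup>2", OF DERIV_real_sqrt[OF S] d3']  by simp
  have dh0: "((\<lambda>r. 1 / (2 * pi * sqrt (1 - r\<^sup>2))) has_real_derivative
      (0 * (2 * pi * sqrt (1 - r\<^sup>2)) - 1 * (2 * pi * ((inverse (sqrt (1 - r\<^sup>2)) / 2) * (- 2 * r))))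
       / ((2 * pi * sqrt (1 - r\<^sup>2)) * (2 * pi * sqrt (1 - r\<^sup>2)))) (at r)"
    by (rule DERIV_divide DERIV_const DERIV_cmult dsq)+ (use S in auto)
  have eh: "(0 * (2 * pi * sqrt (1 - r\<^sup>2)) - 1 * (2 * pi * ((inverse (sqrt (1 - r\<^sup>2)) / 2) * (- 2 * r))))
       / ((2 * pi * sqrt (1 - r\<^sup>2)) * (2 * pi * sqrt (1 - r\<^sup>2)))
      = 1 / (2 * pi * sqrt (1 - r\<^sup>2)) * (r / (1 - r\<^sup>2))"
  proof -
    have q: "sqrt (1 - r\<^sup>2) * sqrt (1 - r\<^sup>2) = 1 - r\<^sup>2" using S by simp
    have q0: "sqrt (1 - r\<^sup>2) > 0" using S by simp
    show ?thesis using q q0 s pi_gt_zero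
      by (simp add: field_simps)
  qed
  have "((\<lambda>r. exp (- (N - 2 * r * p) / (2 * (1 - r\<^sup>2))) * (1 / (2 * pi * sqrt (1 - r\<^sup>2)))) has_real_derivative
     exp (- (N - 2 * r * p) / (2 * (1 - r\<^sup>2))) * ((p * (1 + r\<^sup>2) - r * N) / (1 - r\<^sup>2)\<^sup>2) * (1 / (2 * pi * sqrt (1 - r\<^sup>2)))
     + (1 / (2 * pi * sqrt (1 - r\<^sup>2)) * (r / (1 - r\<^sup>2))) * exp (- (N - 2 * r * p) / (2 * (1 - r\<^sup>2)))) (at r)"
    using DERIV_mult[OF dE dh0] unfolding eh .
  moreover have "(\<lambda>r. bvn_pdf r z) = (\<lambda>r. exp (- (N - 2 * r * p) / (2 * (1 - r\<^sup>2))) * (1 / (2 * pi * sqrt (1 - r\<^sup>2))))"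
    unfolding pdf_alt QQ_def p_def N_def by simp
  moreover have "d1 r z = exp (- (N - 2 * r * p) / (2 * (1 - r\<^sup>2))) * ((p * (1 + r\<^sup>2) - r * N) / (1 - r\<^sup>2)\<^sup>2) * (1 / (2 * pi * sqrt (1 - r\<^sup>2)))
     + (1 / (2 * pi * sqrt (1 - r\<^sup>2)) * (r / (1 - r\<^sup>2))) * exp (- (N - 2 * r * p) / (2 * (1 - r\<^sup>2)))"
    unfolding d1_def pdf_alt AA_def QQ_def p_def[symmetric] N_def[symmetric]
    using s S by (simp add: field_simps)
  ultimately show ?thesis by simp
qed

lemma d1_deriv:
  assumes "\<bar>r\<bar> < 1"
  shows "((\<lambda>r. d1 r z) has_real_derivative d2 r z) (at r)"
proof -
  have "((\<lambda>r. bvn_pdf r z * AA r z) has_real_derivative d1 r z * AA r z + AA' r z * bvn_pdf r z) (at r)"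
    by (rule DERIV_mult[OF pdf_deriv[OF assms] AA_deriv[OF assms]])
  moreover have "d1 r z * AA r z + AA' r z * bvn_pdf r z = d2 r z"
    unfolding d1_def d2_def by (simp add: distrib_left power2_eq_square mult.assoc mult.commute)
  moreover have "(\<lambda>r. bvn_pdf r z * AA r z) = (\<lambda>r. d1 r z)" unfolding d1_def by simp
  ultimately show ?thesis by simp
qed

lemma pdf_nonneg: "\<bar>r\<bar> < 1 \<Longrightarrow> 0 \<le> bvn_pdf r z"
  using s_pos[of r] by (simp add: bvn_pdf_def)

lemma pdf_pos: "\<bar>r\<bar> < 1 \<Longrightarrow> 0 < bvn_pdf r z"
  using s_pos[of r] by (simp add: bvn_pdf_def)

lemma NN_nonneg: "0 \<le> NN z" by (simp add: NN_def)

lemma p_bound: "\<bar>fst z * snd z\<bar> \<le> NN z / 2"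
proof -
  have "0 \<le> (fst z - snd z)\<^sup>2" "0 \<le> (fst z + snd z)\<^sup>2" by auto
  then show ?thesis unfolding NN_def by (auto simp: power2_eq_square algebra_simps abs_le_iff)
qed

lemma QQ_lower:
  assumes "\<bar>r\<bar> \<le> 1"
  shows "(1 - \<bar>r\<bar>) * NN z \<le> QQ r z"
proof -
  have "\<bar>2 * r * (fst z * snd z)\<bar> \<le> \<bar>r\<bar> * NN z"
    using mult_left_mono[OF p_bound[of z], of "2 * \<bar>r\<bar>"] by (simp add: abs_mult)
  then show ?thesis unfolding QQ_def by (simp add: algebra_simps abs_le_iff)
qed

lemma pdf_bound:
  assumes "\<bar>r\<bar> \<le> c" "c < 1"
  shows "bvn_pdf r z \<le> exp (- NN z / 4) / sqrt (1 - c\<^sup>2)"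
proof -
  have r1: "\<bar>r\<bar> < 1" using assms by auto
  have S: "0 < 1 - r\<^sup>2" using s_pos[OF r1] .
  have m: "0 < 1 - c\<^sup>2" using assms s_pos[of c] by auto
  have sm: "1 - c\<^sup>2 \<le> 1 - r\<^sup>2"
  proof -
    have "\<bar>r\<bar>\<^sup>2 \<le> c\<^sup>2" using power_mono[OF assms(1) abs_ge_zero, of 2] .
    then show ?thesis by simp
  qed
  have "NN z / 4 \<le> QQ r z / (2 * (1 - r\<^sup>2))"
  proof -
    have "(1 - \<bar>r\<bar>) * NN z \<le> QQ r z" using QQ_lower r1 by auto
    moreover have "1 - r\<^sup>2 = (1 - \<bar>r\<bar>) * (1 + \<bar>r\<bar>)" by (simp add: algebra_simps power2_eq_square)
    moreover have "(1 - \<bar>r\<bar>) * NN z * 2 \<ge> (1 - r\<^sup>2) * NN z"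
    proof -
      have "1 - r\<^sup>2 \<le> (1 - \<bar>r\<bar>) * 2"
      proof -
        have h: "0 \<le> (1 - \<bar>r\<bar>)\<^sup>2" by simp
        have "1 - \<bar>r\<bar>\<^sup>2 \<le> (1 - \<bar>r\<bar>) * 2" using h by (simp add: power2_eq_square algebra_simps)
        then show ?thesis by simp
      qed
      from mult_right_mono[OF this NN_nonneg[of z]] show ?thesis by (simp add: algebra_simps)
    qed
    ultimately have "(1 - r\<^sup>2) * NN z \<le> QQ r z * 2" by linarith
    then show ?thesis using S by (simp add: field_simps)
  qed
  then have e: "exp (- QQ r z / (2 * (1 - r\<^sup>2))) \<le> exp (- NN z / 4)" by simp
  have "2 * pi * sqrt (1 - r\<^sup>2) \<ge> sqrt (1 - c\<^sup>2)"
  proof -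
    have "sqrt (1 - c\<^sup>2) \<le> sqrt (1 - r\<^sup>2)" using sm by simp
    also have "\<dots> \<le> 2 * pi * sqrt (1 - r\<^sup>2)" using pi_gt3 S by (simp add: mult_le_cancel_right1)
    finally show ?thesis .
  qed
  then have "exp (- QQ r z / (2 * (1 - r\<^sup>2))) / (2 * pi * sqrt (1 - r\<^sup>2)) \<le> exp (- NN z / 4) / sqrt (1 - c\<^sup>2)"
    using e m by (intro frac_le) auto
  then show ?thesis by (simp add: pdf_alt)
qed

lemma div_pow_bound:
  fixes m S X :: real
  assumes "0 < m" "m \<le> S" "m \<le> 1" "0 \<le> X" "k \<le> 3"
  shows "X / S ^ k \<le> X / m ^ 3"
proof -
  have "m ^ 3 \<le> m ^ k" using assms by (intro power_decreasing) auto
  also have "\<dots> \<le> S ^ k" using assms by (intro power_mono) auto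
  finally have "m ^ 3 \<le> S ^ k" .
  then show ?thesis using assms by (intro divide_left_mono) auto
qed

definition KK :: "real \<Rightarrow> real" where "KK c = 12 / (1 - c\<^sup>2) ^ 3"

lemma AA_bounds:
  assumes "\<bar>r\<bar> \<le> c" "c < 1"
  shows "\<bar>AA r z\<bar> \<le> KK c * (1 + NN z)" "\<bar>AA' r z\<bar> \<le> KK c * (1 + NN z)"
proof -
  define S where "S = 1 - r\<^sup>2"
  define m where "m = 1 - c\<^sup>2"
  define N where "N = NN z"
  define p where "p = fst z * snd z"
  have r1: "\<bar>r\<bar> < 1" using assms by auto
  have m0: "0 < m" using assms s_pos[of c] by (auto simp: m_def)
  have m1: "m \<le> 1" by (simp add: m_def)
  have mS: "m \<le> S"
  proof -
    have "\<bar>r\<bar>\<^sup>2 \<le> c\<^sup>2" using power_mono[OF assms(1) abs_ge_zero, of 2] .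
    then show ?thesis by (simp add: m_def S_def)
  qed
  have S0: "0 < S" using m0 mS by auto
  have N0: "0 \<le> N" by (simp add: N_def NN_nonneg)
  have pb: "\<bar>p\<bar> \<le> N / 2" using p_bound[of z] by (simp add: p_def N_def)
  have r2: "r\<^sup>2 \<le> 1" using r1 abs_square_less_1[of r] by auto
  have ar: "\<bar>r\<bar> \<le> 1" using r1 by auto
  have nb: "\<bar>p * (1 + r\<^sup>2) - r * N\<bar> \<le> 2 * N"
  proof -
    have "\<bar>p * (1 + r\<^sup>2) - r * N\<bar> \<le> \<bar>p * (1 + r\<^sup>2)\<bar> + \<bar>r * N\<bar>"
      by (rule abs_triangle_ineq4)
    also have "\<dots> = \<bar>p\<bar> * (1 + r\<^sup>2) + \<bar>r\<bar> * N"
      using N0 by (simp add: abs_mult)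
    also have "\<dots> \<le> (N / 2) * 2 + 1 * N"
      using pb r2 ar N0 by (intro add_mono mult_mono) auto
    finally show ?thesis by simp
  qed
  have K: "KK c = 12 / m ^ 3" by (simp add: KK_def m_def)
  have "\<bar>AA r z\<bar> = \<bar>(p * (1 + r\<^sup>2) - r * N) / S\<^sup>2 + r / S\<bar>"
    unfolding AA_def S_def p_def N_def by simp
  also have "\<dots> \<le> \<bar>(p * (1 + r\<^sup>2) - r * N) / S\<^sup>2\<bar> + \<bar>r / S\<bar>" by (rule abs_triangle_ineq)
  also have "\<dots> = \<bar>p * (1 + r\<^sup>2) - r * N\<bar> / S\<^sup>2 + \<bar>r\<bar> / S" using S0 by (simp add: abs_divide)
  also have "\<dots> \<le> (2 * N) / m ^ 3 + 1 / m ^ 3"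
  proof (intro add_mono)
    have "\<bar>p * (1 + r\<^sup>2) - r * N\<bar> / S\<^sup>2 \<le> (2 * N) / S\<^sup>2" using nb S0 by (intro divide_right_mono) auto
    also have "\<dots> \<le> (2 * N) / m ^ 3" using div_pow_bound[OF m0 mS m1, of "2 * N" 2] N0 by simp
    finally show "\<bar>p * (1 + r\<^sup>2) - r * N\<bar> / S\<^sup>2 \<le> (2 * N) / m ^ 3" .
    have "\<bar>r\<bar> / S \<le> 1 / S" using ar S0 by (intro divide_right_mono) auto
    also have "\<dots> \<le> 1 / m ^ 3" using div_pow_bound[OF m0 mS m1, of 1 1] by simp
    finally show "\<bar>r\<bar> / S \<le> 1 / m ^ 3" .
  qed
  also have "\<dots> \<le> KK c * (1 + NN z)" using m0 N0 by (simp add: K N_def[symmetric] field_simps)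
  finally show "\<bar>AA r z\<bar> \<le> KK c * (1 + NN z)" .
  have "\<bar>AA' r z\<bar> = \<bar>(2 * r * p - N) / S\<^sup>2 + 4 * r * (p * (1 + r\<^sup>2) - r * N) / S ^ 3 + (1 + r\<^sup>2) / S\<^sup>2\<bar>"
    unfolding AA'_def S_def p_def N_def by simp
  also have "\<dots> \<le> \<bar>(2 * r * p - N) / S\<^sup>2\<bar> + \<bar>4 * r * (p * (1 + r\<^sup>2) - r * N) / S ^ 3\<bar> + \<bar>(1 + r\<^sup>2) / S\<^sup>2\<bar>"
    by (rule order_trans[OF abs_triangle_ineq add_right_mono[OF abs_triangle_ineq]])
  also have "\<dots> = \<bar>2 * r * p - N\<bar> / S\<^sup>2 + 4 * \<bar>r\<bar> * \<bar>p * (1 + r\<^sup>2) - r * N\<bar> / S ^ 3 + (1 + r\<^sup>2) / S\<^sup>2"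
    using S0 by (simp add: abs_divide abs_mult)
  also have "\<dots> \<le> (2 * N) / m ^ 3 + (8 * N) / m ^ 3 + 2 / m ^ 3"
  proof (intro add_mono)
    have "\<bar>2 * r * p - N\<bar> \<le> 2 * N"
    proof -
      have "\<bar>r\<bar> * \<bar>p\<bar> \<le> 1 * (N / 2)" using ar pb by (intro mult_mono) auto
      then have "\<bar>2 * r * p\<bar> \<le> 2 * 1 * (N / 2)" by (simp add: abs_mult)
      then show ?thesis using N0 by (simp add: abs_le_iff)
    qed
    then have "\<bar>2 * r * p - N\<bar> / S\<^sup>2 \<le> (2 * N) / S\<^sup>2" using S0 by (intro divide_right_mono) auto
    also have "\<dots> \<le> (2 * N) / m ^ 3" using div_pow_bound[OF m0 mS m1, of "2 * N" 2] N0 by simp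
    finally show "\<bar>2 * r * p - N\<bar> / S\<^sup>2 \<le> (2 * N) / m ^ 3" .
    have "4 * \<bar>r\<bar> * \<bar>p * (1 + r\<^sup>2) - r * N\<bar> \<le> 4 * 1 * (2 * N)" using ar nb by (intro mult_mono) auto
    then have "4 * \<bar>r\<bar> * \<bar>p * (1 + r\<^sup>2) - r * N\<bar> / S ^ 3 \<le> (8 * N) / S ^ 3" using S0 by (intro divide_right_mono) auto
    also have "\<dots> \<le> (8 * N) / m ^ 3" using div_pow_bound[OF m0 mS m1, of "8 * N" 3] N0 by simp
    finally show "4 * \<bar>r\<bar> * \<bar>p * (1 + r\<^sup>2) - r * N\<bar> / S ^ 3 \<le> (8 * N) / m ^ 3" .
    have "(1 + r\<^sup>2) / S\<^sup>2 \<le> 2 / S\<^sup>2" using r2 S0 by (intro divide_right_mono) auto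
    also have "\<dots> \<le> 2 / m ^ 3" using div_pow_bound[OF m0 mS m1, of 2 2] by simp
    finally show "(1 + r\<^sup>2) / S\<^sup>2 \<le> 2 / m ^ 3" .
  qed
  also have "\<dots> \<le> KK c * (1 + NN z)" using m0 N0 by (simp add: K N_def[symmetric] field_simps)
  finally show "\<bar>AA' r z\<bar> \<le> KK c * (1 + NN z)" .
qed

lemma KK_ge1: assumes "0 \<le> c" "c < 1" shows "1 \<le> KK c"
proof -
  have m0: "0 < 1 - c\<^sup>2" using assms s_pos[of c] by auto
  have "(1 - c\<^sup>2) ^ 3 \<le> 1" using m0 by (intro power_le_one) auto
  moreover have "0 < (1 - c\<^sup>2) ^ 3" using m0 by simp
  ultimately show ?thesis unfolding KK_def by (simp add: field_simps)
qed

lemma exp_poly: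
  fixes N :: real assumes "0 \<le> N"
  shows "(1 + N)\<^sup>2 * exp (- N / 4) \<le> 256 * exp (- N / 8)"
proof -
  have "(1 + N) \<le> 16 * (1 + N / 16)" by simp
  then have "(1 + N)\<^sup>2 \<le> (16 * (1 + N / 16))\<^sup>2" using assms by (intro power_mono) auto
  also have "\<dots> = 256 * (1 + N / 16)\<^sup>2" by (simp add: power2_eq_square algebra_simps)
  also have "(1 + N / 16)\<^sup>2 \<le> (exp (N / 16))\<^sup>2" using assms by (intro power_mono exp_ge_add_one_self) auto
  also have "(exp (N / 16))\<^sup>2 = exp (N / 8)" by (simp add: power2_eq_square exp_add[symmetric])
  finally have "(1 + N)\<^sup>2 \<le> 256 * exp (N / 8)" by simp
  then have "(1 + N)\<^sup>2 * exp (- N / 4) \<le> 256 * exp (N / 8) * exp (- N / 4)" by (intro mult_right_mono) auto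
  also have "\<dots> = 256 * exp (- N / 8)" by (simp add: mult.assoc exp_add[symmetric])
  finally show ?thesis .
qed

definition BB :: "real \<Rightarrow> real \<times> real \<Rightarrow> real" where
  "BB c z = 512 * (KK c)\<^sup>2 / sqrt (1 - c\<^sup>2) * exp (- NN z / 8)"

lemma d_bounds:
  assumes "\<bar>r\<bar> \<le> c" "c < 1"
  shows "\<bar>d1 r z\<bar> \<le> BB c z" "\<bar>d2 r z\<bar> \<le> BB c z"
proof -
  define K where "K = KK c"
  define N where "N = NN z"
  define E where "E = exp (- N / 4) / sqrt (1 - c\<^sup>2)"
  have r1: "\<bar>r\<bar> < 1" using assms by auto
  have c0: "0 \<le> c" using assms by auto
  have m0: "0 < 1 - c\<^sup>2" using assms s_pos[of c] by auto
  have K1: "1 \<le> K" using KK_ge1[OF c0 assms(2)] by (simp add: K_def)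
  have N0: "0 \<le> N" by (simp add: N_def NN_nonneg)
  have E0: "0 \<le> E" using m0 by (simp add: E_def)
  have pb: "bvn_pdf r z \<le> E" using pdf_bound[OF assms] by (simp add: E_def N_def)
  have p0: "0 \<le> bvn_pdf r z" using pdf_nonneg[OF r1] .
  have A: "\<bar>AA r z\<bar> \<le> K * (1 + N)" "\<bar>AA' r z\<bar> \<le> K * (1 + N)"
    using AA_bounds[OF assms] by (simp_all add: K_def N_def)
  have KN: "K * (1 + N) \<le> K\<^sup>2 * (1 + N)\<^sup>2"
  proof -
    have "1 \<le> K * (1 + N)" using K1 N0 by (metis add_increasing2 less_eq_real_def mult_le_cancel_left1 mult_nonneg_nonneg order_trans zero_le_one le_add_same_cancel1)
    then have "K * (1 + N) * 1 \<le> K * (1 + N) * (K * (1 + N))" by (intro mult_left_mono) auto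
    then show ?thesis by (simp add: power2_eq_square algebra_simps)
  qed
  have key: "E * (2 * (K\<^sup>2 * (1 + N)\<^sup>2)) \<le> BB c z"
  proof -
    have "E * (2 * (K\<^sup>2 * (1 + N)\<^sup>2)) = 2 * K\<^sup>2 / sqrt (1 - c\<^sup>2) * ((1 + N)\<^sup>2 * exp (- N / 4))"
      by (simp add: E_def)
    also have "\<dots> \<le> 2 * K\<^sup>2 / sqrt (1 - c\<^sup>2) * (256 * exp (- N / 8))"
      using exp_poly[OF N0] m0 by (intro mult_left_mono) auto
    also have "\<dots> = BB c z" by (simp add: BB_def K_def N_def)
    finally show ?thesis .
  qed
  have "\<bar>d1 r z\<bar> = bvn_pdf r z * \<bar>AA r z\<bar>" using p0 by (simp add: d1_def abs_mult)
  also have "\<dots> \<le> E * (K * (1 + N))" using pb p0 A E0 by (intro mult_mono) auto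
  also have "\<dots> \<le> E * (2 * (K\<^sup>2 * (1 + N)\<^sup>2))"
  proof -
    have "0 \<le> K\<^sup>2 * (1 + N)\<^sup>2" by simp
    then have "K * (1 + N) \<le> 2 * (K\<^sup>2 * (1 + N)\<^sup>2)" using KN by linarith
    then show ?thesis using E0 by (intro mult_left_mono) auto
  qed
  finally show "\<bar>d1 r z\<bar> \<le> BB c z" using key by linarith
  have "\<bar>d2 r z\<bar> \<le> bvn_pdf r z * ((AA r z)\<^sup>2 + \<bar>AA' r z\<bar>)"
  proof -
    have "\<bar>(AA r z)\<^sup>2 + AA' r z\<bar> \<le> (AA r z)\<^sup>2 + \<bar>AA' r z\<bar>"
      using abs_triangle_ineq[of "(AA r z)\<^sup>2" "AA' r z"] by simp
    then show ?thesis using p0 by (simp add: d2_def abs_mult mult_left_mono)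
  qed
  also have "\<dots> \<le> E * ((K * (1 + N))\<^sup>2 + K * (1 + N))"
  proof (intro mult_mono add_mono)
    have "\<bar>AA r z\<bar>\<^sup>2 \<le> (K * (1 + N))\<^sup>2" using A(1) by (intro power_mono) auto
    then show "(AA r z)\<^sup>2 \<le> (K * (1 + N))\<^sup>2" by simp
  qed (use pb p0 A E0 in auto)
  also have "\<dots> \<le> E * (2 * (K\<^sup>2 * (1 + N)\<^sup>2))" using KN E0 by (intro mult_left_mono) (auto simp: power_mult_distrib)
  finally show "\<bar>d2 r z\<bar> \<le> BB c z" using key by linarith
qed

lemma nn_prod:
  fixes f g :: "real \<Rightarrow> real"
  assumes [measurable]: "f \<in> borel_measurable borel" "g \<in> borel_measurable borel"
  assumes f0: "\<And>x. 0 \<le> f x" and g0: "\<And>x. 0 \<le> g x"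
  shows "(\<integral>\<^sup>+z. ennreal (f (fst z) * g (snd z)) \<partial>(lborel::(real \<times> real) measure))
       = (\<integral>\<^sup>+x. ennreal (f x) \<partial>lborel) * (\<integral>\<^sup>+y. ennreal (g y) \<partial>lborel)"
proof -
  have "(\<integral>\<^sup>+z. ennreal (f (fst z) * g (snd z)) \<partial>(lborel::(real \<times> real) measure))
      = (\<integral>\<^sup>+z. ennreal (f (fst z) * g (snd z)) \<partial>(lborel \<Otimes>\<^sub>M lborel))"
    by (simp add: lborel_prod)
  also have "\<dots> = (\<integral>\<^sup>+x. \<integral>\<^sup>+y. ennreal (f (fst (x, y)) * g (snd (x, y))) \<partial>lborel \<partial>lborel)"
    by (rule lborel.nn_integral_fst[symmetric]) measurable
  also have "\<dots> = (\<integral>\<^sup>+x. ennreal (f x) * (\<integral>\<^sup>+y. ennreal (g y) \<partial>lborel) \<partial>lborel)"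
    using f0 g0 by (simp add: ennreal_mult nn_integral_cmult)
  also have "\<dots> = (\<integral>\<^sup>+x. ennreal (f x) \<partial>lborel) * (\<integral>\<^sup>+y. ennreal (g y) \<partial>lborel)"
    by (simp add: nn_integral_multc)
  finally show ?thesis .
qed

lemma nn_normal: "0 < \<sigma> \<Longrightarrow> (\<integral>\<^sup>+x. ennreal (normal_density \<mu> \<sigma> x) \<partial>lborel) = 1"
  using nn_integral_eq_integral[of lborel "normal_density \<mu> \<sigma>"] integral_normal_density[of \<sigma> \<mu>]
    integrable_normal_density[of \<sigma> \<mu>] by simp

lemma pdf_factor:
  assumes "\<bar>r\<bar> < 1"
  shows "bvn_pdf r z = normal_density 0 1 (fst z) * normal_density (r * fst z) (sqrt (1 - r\<^sup>2)) (snd z)"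
proof -
  define x where "x = fst z"
  define y where "y = snd z"
  define s where "s = 1 - r\<^sup>2"
  have s0: "0 < s" using s_pos[OF assms] by (simp add: s_def)
  have e: "- x\<^sup>2 / 2 + - (y - r * x)\<^sup>2 / (2 * s) = - (x\<^sup>2 - 2 * r * x * y + y\<^sup>2) / (2 * s)"
    using s0 by (simp add: field_simps s_def power2_eq_square)
  have c: "sqrt (2 * pi) * sqrt (2 * pi * s) = 2 * pi * sqrt s"
  proof -
    have "sqrt (2 * pi * s) = sqrt (2 * pi) * sqrt s" by (simp add: real_sqrt_mult)
    then have "sqrt (2 * pi) * sqrt (2 * pi * s) = (sqrt (2 * pi) * sqrt (2 * pi)) * sqrt s" by simp
    also have "sqrt (2 * pi) * sqrt (2 * pi) = 2 * pi" using pi_gt_zero by simp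
    finally show ?thesis .
  qed
  have "normal_density 0 1 x * normal_density (r * x) (sqrt s) y
      = exp (- x\<^sup>2 / 2) * exp (- (y - r * x)\<^sup>2 / (2 * s)) / (sqrt (2 * pi) * sqrt (2 * pi * s))"
    using s0 by (simp add: normal_density_def)
  also have "\<dots> = exp (- x\<^sup>2 / 2 + - (y - r * x)\<^sup>2 / (2 * s)) / (sqrt (2 * pi) * sqrt (2 * pi * s))"
    by (subst exp_add) (rule refl)
  also have "\<dots> = bvn_pdf r z" unfolding e c by (simp add: bvn_pdf_def x_def y_def s_def)
  finally show ?thesis by (simp add: x_def y_def s_def)
qed

lemma pdf_measurable[measurable]: "bvn_pdf r \<in> borel_measurable borel"
  unfolding bvn_pdf_def borel_prod[symmetric] by measurable

lemma d1_measurable[measurable]: "d1 r \<in> borel_measurable borel"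
  unfolding d1_def[abs_def] bvn_pdf_def AA_def NN_def borel_prod[symmetric] by measurable

lemma d2_measurable[measurable]: "d2 r \<in> borel_measurable borel"
  unfolding d2_def[abs_def] bvn_pdf_def AA_def AA'_def NN_def borel_prod[symmetric] by measurable

lemma nn_pdf:
  assumes "\<bar>r\<bar> < 1"
  shows "(\<integral>\<^sup>+z. ennreal (bvn_pdf r z) \<partial>lborel) = 1"
proof -
  have sq: "0 < sqrt (1 - r\<^sup>2)" using s_pos[OF assms] by simp
  have "(\<integral>\<^sup>+z. ennreal (bvn_pdf r z) \<partial>(lborel::(real \<times> real) measure))
      = (\<integral>\<^sup>+z. ennreal (normal_density 0 1 (fst z) * normal_density (r * fst z) (sqrt (1 - r\<^sup>2)) (snd z)) \<partial>(lborel \<Otimes>\<^sub>M lborel))"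
    by (simp add: lborel_prod pdf_factor[OF assms])
  also have "\<dots> = (\<integral>\<^sup>+x. \<integral>\<^sup>+y. ennreal (normal_density 0 1 x * normal_density (r * x) (sqrt (1 - r\<^sup>2)) y) \<partial>lborel \<partial>lborel)"
  proof -
    have "(\<lambda>z. ennreal (normal_density 0 1 (fst z) * normal_density (r * fst z) (sqrt (1 - r\<^sup>2)) (snd z))) \<in> borel_measurable (borel :: (real \<times> real) measure)"
      unfolding borel_prod[symmetric] normal_density_def by measurable
    then have "(\<lambda>z. ennreal (normal_density 0 1 (fst z) * normal_density (r * fst z) (sqrt (1 - r\<^sup>2)) (snd z))) \<in> borel_measurable (lborel \<Otimes>\<^sub>M lborel)"
      by (simp add: lborel_prod)
    then show ?thesis by (subst lborel.nn_integral_fst[symmetric]) simp_all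
  qed
  also have "\<dots> = (\<integral>\<^sup>+x. ennreal (normal_density 0 1 x) * (\<integral>\<^sup>+y. ennreal (normal_density (r * x) (sqrt (1 - r\<^sup>2)) y) \<partial>lborel) \<partial>lborel)"
    by (simp add: ennreal_mult nn_integral_cmult)
  also have "\<dots> = (\<integral>\<^sup>+x. ennreal (normal_density 0 1 x) \<partial>lborel)"
    using nn_normal[OF sq] by simp
  also have "\<dots> = 1" using nn_normal[of 1 0] by simp
  finally show ?thesis .
qed

lemma prob_bvn: "\<bar>r\<bar> < 1 \<Longrightarrow> prob_space (bvn r)"
  unfolding bvn_def
  by (rule prob_spaceI) (simp add: emeasure_density nn_pdf)

lemma integrable_pdf: "\<bar>r\<bar> < 1 \<Longrightarrow> integrable lborel (bvn_pdf r)"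
  by (rule integrableI_nonneg) (auto simp: nn_pdf pdf_nonneg)

lemma integrable_BB: "c < 1 \<Longrightarrow> integrable lborel (BB c)"
proof -
  assume c: "c < 1"
  define C where "C = 512 * (KK c)\<^sup>2 / sqrt (1 - c\<^sup>2) * (8 * pi)"
  have BBeq: "BB c z = C * (normal_density 0 2 (fst z) * normal_density 0 2 (snd z))" for z
  proof -
    have "normal_density 0 2 (fst z) * normal_density 0 2 (snd z) = exp (- NN z / 8) / (8 * pi)"
      by (simp add: normal_density_def NN_def exp_add[symmetric] real_sqrt_mult[symmetric] add_divide_distrib diff_divide_distrib)
    then show ?thesis by (simp add: BB_def C_def)
  qed
  have m: "(\<lambda>z::real\<times>real. normal_density 0 2 (fst z) * normal_density 0 2 (snd z)) \<in> borel_measurable borel"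
    unfolding borel_prod[symmetric] by measurable
  have "integrable lborel (\<lambda>z::real\<times>real. normal_density 0 2 (fst z) * normal_density 0 2 (snd z))"
    by (rule integrableI_nonneg) (use m in \<open>auto simp: nn_prod nn_normal ennreal_mult[symmetric]\<close>)
  then show ?thesis unfolding BBeq[abs_def] by simp
qed

definition G1 :: "(real \<times> real) set \<Rightarrow> real \<Rightarrow> real" where
  "G1 S r = (\<integral>z. indicator S z * d1 r z \<partial>lborel)"
definition G2 :: "(real \<times> real) set \<Rightarrow> real \<Rightarrow> real" where
  "G2 S r = (\<integral>z. indicator S z * d2 r z \<partial>lborel)"

lemma sets_bvn[simp]: "sets (bvn r) = sets borel"
  by (simp add: bvn_def)

lemma meas_eq:
  assumes r: "\<bar>r\<bar> < 1" and S: "S \<in> sets borel"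
  shows "measure (bvn r) S = (\<integral>z. indicator S z * bvn_pdf r z \<partial>lborel)"
proof -
  have [measurable]: "S \<in> sets borel" using S .
  have "emeasure (bvn r) S = (\<integral>\<^sup>+z. ennreal (bvn_pdf r z) * indicator S z \<partial>lborel)"
    unfolding bvn_def by (rule emeasure_density) (auto simp: S)
  also have "\<dots> = (\<integral>\<^sup>+z. ennreal (indicator S z * bvn_pdf r z) \<partial>lborel)"
    by (intro nn_integral_cong) (auto simp: indicator_def)
  finally have e: "emeasure (bvn r) S = (\<integral>\<^sup>+z. ennreal (indicator S z * bvn_pdf r z) \<partial>lborel)" .
  have "(\<integral>z. indicator S z * bvn_pdf r z \<partial>lborel) = enn2real (\<integral>\<^sup>+z. ennreal (indicator S z * bvn_pdf r z) \<partial>lborel)"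
    by (rule integral_eq_nn_integral) (auto simp: pdf_nonneg[OF r])
  then show ?thesis using e by (simp add: measure_def)
qed

lemma G_deriv:
  assumes r0: "\<bar>r0\<bar> < 1" and S: "S \<in> sets borel"
  shows "((\<lambda>r. measure (bvn r) S) has_real_derivative G1 S r0) (at r0)"
proof -
  have [measurable]: "S \<in> sets borel" using S .
  define c where "c = (1 + \<bar>r0\<bar>) / 2"
  have c1: "c < 1" and rc: "-c < r0" "r0 < c" using r0 unfolding c_def by (auto split: abs_split simp: field_simps)
  have inI: "\<bar>r\<bar> \<le> c" "\<bar>r\<bar> < 1" if "r \<in> {-c<..<c}" for r using that c1 by auto
  have "((\<lambda>r. \<integral>z. indicator S z * bvn_pdf r z \<partial>lborel) has_real_derivative
        (\<integral>z. indicator S z * d1 r0 z \<partial>lborel)) (at r0)"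
  proof (rule deriv_integral[where g = "BB c", OF rc])
    show "integrable lborel (\<lambda>z. indicator S z * bvn_pdf r z)" if "r \<in> {-c<..<c}" for r
      using integrable_mult_indicator[OF _ integrable_pdf[OF inI(2)[OF that]], of S] by simp
    show "(\<lambda>z. indicator S z * d1 r z) \<in> borel_measurable lborel" for r by measurable
    show "((\<lambda>r. indicator S z * bvn_pdf r z) has_real_derivative indicator S z * d1 r z) (at r)"
      if "r \<in> {-c<..<c}" for r z
      using pdf_deriv[OF inI(2)[OF that]] by (intro DERIV_cmult)
    show "\<bar>indicator S z * d1 r z\<bar> \<le> BB c z" if "r \<in> {-c<..<c}" for r z
    proof -
      have "\<bar>d1 r z\<bar> \<le> BB c z" using d_bounds[OF inI(1)[OF that] c1] by simp
      moreover have "0 \<le> BB c z" using calculation by linarith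
      ultimately show ?thesis by (auto simp: indicator_def)
    qed
    show "integrable lborel (BB c)" using integrable_BB[OF c1] .
  qed
  then show ?thesis unfolding G1_def
    by (rule has_field_derivative_transform_within_open[where S = "{-c<..<c}"])
       (use rc inI in \<open>auto simp: meas_eq[OF _ S]\<close>)
qed

lemma G1_deriv:
  assumes r0: "\<bar>r0\<bar> < 1" and S: "S \<in> sets borel"
  shows "(G1 S has_real_derivative G2 S r0) (at r0)"
proof -
  have [measurable]: "S \<in> sets borel" using S .
  define c where "c = (1 + \<bar>r0\<bar>) / 2"
  have c1: "c < 1" and rc: "-c < r0" "r0 < c" using r0 unfolding c_def by (auto split: abs_split simp: field_simps)
  have inI: "\<bar>r\<bar> \<le> c" "\<bar>r\<bar> < 1" if "r \<in> {-c<..<c}" for r using that c1 by auto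
  have B0: "0 \<le> BB c z" for z
  proof -
    have "0 < 1 - c\<^sup>2" using c1 rc s_pos[of c] by auto
    then show ?thesis unfolding BB_def by simp
  qed
  have "((\<lambda>r. \<integral>z. indicator S z * d1 r z \<partial>lborel) has_real_derivative
        (\<integral>z. indicator S z * d2 r0 z \<partial>lborel)) (at r0)"
  proof (rule deriv_integral[where g = "BB c", OF rc])
    show "integrable lborel (\<lambda>z. indicator S z * d1 r z)" if "r \<in> {-c<..<c}" for r
    proof (rule Bochner_Integration.integrable_bound[OF integrable_BB[OF c1]])
      show "(\<lambda>z. indicator S z * d1 r z) \<in> borel_measurable lborel" by measurable
      show "AE z in lborel. norm (indicator S z * d1 r z) \<le> norm (BB c z)"
        using d_bounds[OF inI(1)[OF that] c1] B0 by (auto simp: indicator_def)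
    qed
    show "(\<lambda>z. indicator S z * d2 r z) \<in> borel_measurable lborel" for r by measurable
    show "((\<lambda>r. indicator S z * d1 r z) has_real_derivative indicator S z * d2 r z) (at r)"
      if "r \<in> {-c<..<c}" for r z
      using d1_deriv[OF inI(2)[OF that]] by (intro DERIV_cmult)
    show "\<bar>indicator S z * d2 r z\<bar> \<le> BB c z" if "r \<in> {-c<..<c}" for r z
      using d_bounds[OF inI(1)[OF that] c1] B0 by (auto simp: indicator_def)
    show "integrable lborel (BB c)" using integrable_BB[OF c1] .
  qed
  then show ?thesis unfolding G1_def[abs_def] G2_def .
qed

lemma transform:
  fixes T :: "real \<times> real \<Rightarrow> real \<times> real"
  assumes D: "distr lborel borel T = lborel" and Tm[measurable]: "T \<in> borel_measurable borel"
    and P: "\<And>z. bvn_pdf r (T z) = bvn_pdf r' z" and A[measurable]: "A \<in> sets borel"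
  shows "measure (bvn r) A = measure (bvn r') (T -` A)"
proof -
  have "emeasure (bvn r) A = (\<integral>\<^sup>+z. ennreal (bvn_pdf r z) * indicator A z \<partial>lborel)"
    unfolding bvn_def by (rule emeasure_density) auto
  also have "\<dots> = (\<integral>\<^sup>+z. ennreal (bvn_pdf r z) * indicator A z \<partial>distr lborel borel T)"
    by (simp add: D)
  also have "\<dots> = (\<integral>\<^sup>+z. ennreal (bvn_pdf r (T z)) * indicator A (T z) \<partial>lborel)"
    by (rule nn_integral_distr) auto
  also have "\<dots> = (\<integral>\<^sup>+z. ennreal (bvn_pdf r' z) * indicator (T -` A) z \<partial>lborel)"
    by (simp add: P indicator_def)
  also have "\<dots> = emeasure (bvn r') (T -` A)"
    unfolding bvn_def by (rule emeasure_density[symmetric]) (use measurable_sets[OF Tm A] in auto)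
  finally show ?thesis by (simp add: measure_def)
qed

lemma distr_neg: "distr lborel borel (\<lambda>z::real\<times>real. (- fst z, - snd z)) = lborel"
proof -
  have "distr lborel borel (\<lambda>z::real\<times>real. (- fst z, - snd z)) = distr lborel borel (\<lambda>x::real\<times>real. 0 + (-1) *\<^sub>R x)"
    by (intro distr_cong) auto
  also have "\<dots> = lborel"
    by (subst lborel_affine[of "-1" "0::real\<times>real"]) (auto simp: density_1 one_ennreal_def[symmetric])
  finally show ?thesis .
qed

lemma distr_swap: "distr lborel borel (\<lambda>z::real\<times>real. (snd z, fst z)) = lborel"
proof -
  have "distr lborel borel (\<lambda>z::real\<times>real. (snd z, fst z)) = distr (lborel \<Otimes>\<^sub>M lborel) (lborel \<Otimes>\<^sub>M lborel) (\<lambda>(x, y). (y, x))"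
  proof (rule distr_cong)
    show "lborel = lborel \<Otimes>\<^sub>M (lborel :: real measure)" by (simp add: lborel_prod)
    show "sets (borel::(real\<times>real) measure) = sets (lborel \<Otimes>\<^sub>M lborel :: (real\<times>real) measure)"
      by (simp only: lborel_prod) simp
  qed auto
  also have "\<dots> = lborel \<Otimes>\<^sub>M lborel" by (rule lborel_pair.distr_pair_swap[symmetric])
  finally show ?thesis by (simp add: lborel_prod)
qed

lemma distr_refl: "distr lborel borel (\<lambda>z::real\<times>real. (- fst z, snd z)) = lborel"
proof -
  define c :: "real \<times> real \<Rightarrow> real" where "c j = (if j = (1, 0) then -1 else 1)" for j
  have B: "(Basis :: (real \<times> real) set) = {(1, 0), (0, 1)}" by (auto simp: Basis_prod_def)
  have T: "(\<lambda>x::real\<times>real. 0 + (\<Sum>j\<in>Basis. (c j * (x \<bullet> j)) *\<^sub>R j)) = (\<lambda>z. (- fst z, snd z))"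
    by (auto simp: B c_def inner_prod_def)
  have "lborel = density (distr lborel borel (\<lambda>x::real\<times>real. 0 + (\<Sum>j\<in>Basis. (c j * (x \<bullet> j)) *\<^sub>R j))) (\<lambda>_. (\<Prod>j\<in>Basis. \<bar>c j\<bar>))"
    by (rule lborel_affine_euclidean) (auto simp: c_def)
  also have "(\<lambda>_::real\<times>real. ennreal (\<Prod>j\<in>Basis. \<bar>c j\<bar>)) = (\<lambda>_. 1)" by (auto simp: B c_def)
  finally show ?thesis unfolding T by (simp add: density_1)
qed

lemma pdf_neg: "bvn_pdf r (- fst z, - snd z) = bvn_pdf r z"
  by (simp add: bvn_pdf_def)
lemma pdf_swap: "bvn_pdf r (snd z, fst z) = bvn_pdf r z"
  by (simp add: bvn_pdf_def algebra_simps)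
lemma pdf_refl: "bvn_pdf r (- fst z, snd z) = bvn_pdf (- r) z"
  by (simp add: bvn_pdf_def)

lemma lines_null:
  "AE z in (lborel :: (real \<times> real) measure). fst z \<notin> {a, b, c} \<and> snd z \<notin> {a, b, c}"
proof -
  have n1: "{z::real\<times>real. fst z = t} \<in> null_sets lborel" for t
  proof -
    have "{z::real\<times>real. fst z = t} = {t} \<times> UNIV" by auto
    moreover have "emeasure (lborel \<Otimes>\<^sub>M lborel) ({t} \<times> (UNIV::real set)) = 0"
      by (simp add: lborel.emeasure_pair_measure_Times)
    ultimately show ?thesis by (simp add: null_sets_def lborel_prod[symmetric])
  qed
  have n2: "{z::real\<times>real. snd z = t} \<in> null_sets lborel" for t
  proof -
    have "{z::real\<times>real. snd z = t} = UNIV \<times> {t}" by auto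
    moreover have "emeasure (lborel \<Otimes>\<^sub>M lborel) ((UNIV::real set) \<times> {t}) = 0"
      by (simp add: lborel.emeasure_pair_measure_Times)
    ultimately show ?thesis by (simp add: null_sets_def lborel_prod[symmetric])
  qed
  let ?N = "{z::real\<times>real. fst z = a} \<union> {z. fst z = b} \<union> {z. fst z = c} \<union> {z. snd z = a} \<union> {z. snd z = b} \<union> {z. snd z = c}"
  have "?N \<in> null_sets lborel" using n1 n2 by (intro null_sets.Un) auto
  then show ?thesis by (rule AE_I') auto
qed

lemma bvn_ae_eq:
  assumes r: "\<bar>r\<bar> < 1" and [measurable]: "A \<in> sets borel" "B \<in> sets borel"
    and eq: "\<And>z. fst z \<notin> {a, b, c} \<Longrightarrow> snd z \<notin> {a, b, c} \<Longrightarrow> (z \<in> A \<longleftrightarrow> z \<in> B)"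
  shows "measure (bvn r) A = measure (bvn r) B"
proof (rule measure_eq_AE)
  have "AE z in lborel. z \<in> A \<longleftrightarrow> z \<in> B"
    using lines_null[of a b c] by eventually_elim (use eq in auto)
  then show "AE z in bvn r. z \<in> A \<longleftrightarrow> z \<in> B"
    unfolding bvn_def by (subst AE_density) (auto elim: AE_mp)
qed auto

definition Cset :: "real \<Rightarrow> nat \<Rightarrow> nat \<Rightarrow> (real \<times> real) set" where
  "Cset w i j = {z. code2 w (fst z) = i \<and> code2 w (snd z) = j}"

lemma code2_meas[measurable]: "code2 w \<in> borel_measurable borel"
  unfolding code2_def[abs_def] by measurable

lemma Cset_sets[measurable]: "Cset w i j \<in> sets borel"
proof -
  have "Cset w i j = {z \<in> space (borel \<Otimes>\<^sub>M borel). code2 w (fst z) = i \<and> code2 w (snd z) = j}"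
    by (auto simp: Cset_def space_pair_measure)
  also have "\<dots> \<in> sets (borel \<Otimes>\<^sub>M borel)" by measurable
  finally show ?thesis by (metis borel_prod)
qed

lemma Pcell_def2: "Pcell i j r w = measure (bvn r) (Cset w i j)"
  by (simp add: Pcell_def Cset_def)

lemma neg_meas[measurable]: "(\<lambda>z::real\<times>real. (- fst z, - snd z)) \<in> borel_measurable borel"
  by (intro borel_measurable_continuous_onI continuous_intros)
lemma swap_meas[measurable]: "(\<lambda>z::real\<times>real. (snd z, fst z)) \<in> borel_measurable borel"
  by (intro borel_measurable_continuous_onI continuous_intros)
lemma refl_meas[measurable]: "(\<lambda>z::real\<times>real. (- fst z, snd z)) \<in> borel_measurable borel"
  by (intro borel_measurable_continuous_onI continuous_intros)

lemma pre_sets: "T \<in> borel_measurable borel \<Longrightarrow> A \<in> sets borel \<Longrightarrow> T -` A \<in> sets borel"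
  using measurable_sets[of T borel borel A] by simp

lemma via_neg:
  assumes r: "\<bar>r\<bar> < 1" and A: "A \<in> sets borel" and B: "B \<in> sets borel"
    and eq: "\<And>z. fst z \<notin> {a, b, c} \<Longrightarrow> snd z \<notin> {a, b, c} \<Longrightarrow> ((- fst z, - snd z) \<in> A \<longleftrightarrow> z \<in> B)"
  shows "measure (bvn r) A = measure (bvn r) B"
proof -
  have "measure (bvn r) A = measure (bvn r) ((\<lambda>z::real\<times>real. (- fst z, - snd z)) -` A)"
    by (rule transform[OF distr_neg neg_meas pdf_neg A])
  also have "\<dots> = measure (bvn r) B"
    by (rule bvn_ae_eq[OF r pre_sets[OF neg_meas A] B, of a b c]) (use eq in auto)
  finally show ?thesis .
qed

lemma via_swap:
  assumes r: "\<bar>r\<bar> < 1" and A: "A \<in> sets borel" and B: "B \<in> sets borel"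
    and eq: "\<And>z. fst z \<notin> {a, b, c} \<Longrightarrow> snd z \<notin> {a, b, c} \<Longrightarrow> ((snd z, fst z) \<in> A \<longleftrightarrow> z \<in> B)"
  shows "measure (bvn r) A = measure (bvn r) B"
proof -
  have "measure (bvn r) A = measure (bvn r) ((\<lambda>z::real\<times>real. (snd z, fst z)) -` A)"
    by (rule transform[OF distr_swap swap_meas pdf_swap A])
  also have "\<dots> = measure (bvn r) B"
    by (rule bvn_ae_eq[OF r pre_sets[OF swap_meas A] B, of a b c]) (use eq in auto)
  finally show ?thesis .
qed

lemma via_refl:
  assumes r: "\<bar>r\<bar> < 1" and A: "A \<in> sets borel" and B: "B \<in> sets borel"
    and eq: "\<And>z. fst z \<notin> {a, b, c} \<Longrightarrow> snd z \<notin> {a, b, c} \<Longrightarrow> ((- fst z, snd z) \<in> A \<longleftrightarrow> z \<in> B)"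
  shows "measure (bvn r) A = measure (bvn (- r)) B"
proof -
  have "measure (bvn r) A = measure (bvn (- r)) ((\<lambda>z::real\<times>real. (- fst z, snd z)) -` A)"
    by (rule transform[OF distr_refl refl_meas pdf_refl A])
  also have "\<dots> = measure (bvn (- r)) B"
    by (rule bvn_ae_eq[OF _ pre_sets[OF refl_meas A] B, of _ a b c]) (use eq r in auto)
  finally show ?thesis .
qed

lemma cells:
  assumes w: "0 < w" and r: "\<bar>r\<bar> < 1"
  defines "S22 \<equiv> Cset w 2 2" and "S32 \<equiv> Cset w 3 2" and "S33 \<equiv> Cset w 3 3"
  shows "Pcell 2 2 r w = measure (bvn r) S22" "Pcell 1 1 r w = measure (bvn r) S22"
    "Pcell 3 2 r w = measure (bvn r) S32" "Pcell 2 3 r w = measure (bvn r) S32"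
    "Pcell 0 1 r w = measure (bvn r) S32" "Pcell 1 0 r w = measure (bvn r) S32"
    "Pcell 3 3 r w = measure (bvn r) S33" "Pcell 0 0 r w = measure (bvn r) S33"
    "Pcell 1 2 r w = measure (bvn (- r)) S22" "Pcell 2 1 r w = measure (bvn (- r)) S22"
    "Pcell 0 3 r w = measure (bvn (- r)) S33" "Pcell 3 0 r w = measure (bvn (- r)) S33"
    "Pcell 0 2 r w = measure (bvn (- r)) S32" "Pcell 2 0 r w = measure (bvn (- r)) S32"
    "Pcell 3 1 r w = measure (bvn (- r)) S32" "Pcell 1 3 r w = measure (bvn (- r)) S32"
proof -
  note C = Cset_sets[of w]
  note defs = Cset_def code2_def
  show "Pcell 2 2 r w = measure (bvn r) S22" by (simp add: Pcell_def2 S22_def)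
  show "Pcell 3 2 r w = measure (bvn r) S32" by (simp add: Pcell_def2 S32_def)
  show "Pcell 3 3 r w = measure (bvn r) S33" by (simp add: Pcell_def2 S33_def)
  show "Pcell 1 1 r w = measure (bvn r) S22" unfolding Pcell_def2 S22_def
    by (rule via_neg[OF r C C, of "-w" 0 w]) (use w in \<open>auto simp: defs\<close>)
  show "Pcell 2 3 r w = measure (bvn r) S32" unfolding Pcell_def2 S32_def
    by (rule via_swap[OF r C C, of "-w" 0 w]) (use w in \<open>auto simp: defs\<close>)
  show "Pcell 0 1 r w = measure (bvn r) S32" unfolding Pcell_def2 S32_def
    by (rule via_neg[OF r C C, of "-w" 0 w]) (use w in \<open>auto simp: defs\<close>)
  have "Pcell 1 0 r w = Pcell 0 1 r w" unfolding Pcell_def2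
    by (rule via_swap[OF r C C, of "-w" 0 w]) (use w in \<open>auto simp: defs\<close>)
  then show "Pcell 1 0 r w = measure (bvn r) S32" using \<open>Pcell 0 1 r w = measure (bvn r) S32\<close> by simp
  show "Pcell 0 0 r w = measure (bvn r) S33" unfolding Pcell_def2 S33_def
    by (rule via_neg[OF r C C, of "-w" 0 w]) (use w in \<open>auto simp: defs\<close>)
  show "Pcell 1 2 r w = measure (bvn (- r)) S22" unfolding Pcell_def2 S22_def
    by (rule via_refl[OF r C C, of "-w" 0 w]) (use w in \<open>auto simp: defs\<close>)
  have "Pcell 2 1 r w = Pcell 1 2 r w" unfolding Pcell_def2
    by (rule via_swap[OF r C C, of "-w" 0 w]) (use w in \<open>auto simp: defs\<close>)
  then show "Pcell 2 1 r w = measure (bvn (- r)) S22" using \<open>Pcell 1 2 r w = measure (bvn (- r)) S22\<close> by simp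
  show "Pcell 0 3 r w = measure (bvn (- r)) S33" unfolding Pcell_def2 S33_def
    by (rule via_refl[OF r C C, of "-w" 0 w]) (use w in \<open>auto simp: defs\<close>)
  have "Pcell 3 0 r w = Pcell 0 3 r w" unfolding Pcell_def2
    by (rule via_swap[OF r C C, of "-w" 0 w]) (use w in \<open>auto simp: defs\<close>)
  then show "Pcell 3 0 r w = measure (bvn (- r)) S33" using \<open>Pcell 0 3 r w = measure (bvn (- r)) S33\<close> by simp
  show "Pcell 0 2 r w = measure (bvn (- r)) S32" unfolding Pcell_def2 S32_def
    by (rule via_refl[OF r C C, of "-w" 0 w]) (use w in \<open>auto simp: defs\<close>)
  have "Pcell 2 0 r w = Pcell 0 2 r w" unfolding Pcell_def2
    by (rule via_swap[OF r C C, of "-w" 0 w]) (use w in \<open>auto simp: defs\<close>)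
  then show "Pcell 2 0 r w = measure (bvn (- r)) S32" using \<open>Pcell 0 2 r w = measure (bvn (- r)) S32\<close> by simp
  have "Pcell 3 1 r w = Pcell 0 2 r w" unfolding Pcell_def2
    by (rule via_neg[OF r C C, of "-w" 0 w]) (use w in \<open>auto simp: defs\<close>)
  then show "Pcell 3 1 r w = measure (bvn (- r)) S32" using \<open>Pcell 0 2 r w = measure (bvn (- r)) S32\<close> by simp
  have "Pcell 1 3 r w = Pcell 3 1 r w" unfolding Pcell_def2
    by (rule via_swap[OF r C C, of "-w" 0 w]) (use w in \<open>auto simp: defs\<close>)
  then show "Pcell 1 3 r w = measure (bvn (- r)) S32" using \<open>Pcell 3 1 r w = measure (bvn (- r)) S32\<close> by simp
qed

lemma P_defs:
  assumes w: "0 < w"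
  shows "P22 r w = measure (bvn r) (Cset w 2 2)" "P23 r w = measure (bvn r) (Cset w 3 2)"
    "P33 r w = measure (bvn r) (Cset w 3 3)"
proof -
  have "{z. 0 < fst z \<and> fst z \<le> w \<and> 0 < snd z \<and> snd z \<le> w} = Cset w 2 2"
    using w by (auto simp: Cset_def code2_def)
  then show "P22 r w = measure (bvn r) (Cset w 2 2)" by (simp add: P22_def)
  have "{z. fst z > w \<and> 0 < snd z \<and> snd z \<le> w} = Cset w 3 2"
    using w by (auto simp: Cset_def code2_def)
  then show "P23 r w = measure (bvn r) (Cset w 3 2)" by (simp add: P23_def)
  have "{z. fst z > w \<and> snd z > w} = Cset w 3 3"
    using w by (auto simp: Cset_def code2_def)
  then show "P33 r w = measure (bvn r) (Cset w 3 3)" by (simp add: P33_def)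
qed

lemma bvn_pos:
  assumes r: "\<bar>r\<bar> < 1" and A[measurable]: "A \<in> sets borel"
    and ab: "a < b" "c < d" and sub: "{a<..<b} \<times> {c<..<d} \<subseteq> A"
  shows "0 < measure (bvn r) A"
proof -
  interpret P: prob_space "bvn r" using prob_bvn[OF r] .
  have e: "emeasure (bvn r) A = (\<integral>\<^sup>+z. ennreal (bvn_pdf r z) * indicator A z \<partial>lborel)"
    unfolding bvn_def by (rule emeasure_density) auto
  have "emeasure (bvn r) A \<noteq> 0"
  proof
    assume "emeasure (bvn r) A = 0"
    then have "AE z in lborel. ennreal (bvn_pdf r z) * indicator A z = 0"
      unfolding e by (subst (asm) nn_integral_0_iff_AE) auto
    then have "AE z in lborel. z \<notin> {a<..<b} \<times> {c<..<d}"
      by eventually_elim (use sub pdf_pos[OF r] in \<open>force simp: indicator_def ennreal_eq_0_iff not_le[symmetric]\<close>)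
    then have "emeasure lborel {z \<in> space lborel. z \<in> {a<..<b} \<times> {c<..<d}} = 0"
      by (intro emeasure_eq_0_AE) simp
    moreover have "emeasure (lborel::(real\<times>real) measure) ({a<..<b} \<times> {c<..<d}) = ennreal ((b - a) * (d - c))"
      using ab by (simp add: lborel_prod[symmetric] lborel.emeasure_pair_measure_Times ennreal_mult)
    ultimately show False using ab by simp
  qed
  moreover have "emeasure (bvn r) A < \<top>" using P.emeasure_finite[of A] by (simp add: less_top[symmetric] infinity_ennreal_def)
  moreover have "0 < emeasure (bvn r) A \<longleftrightarrow> emeasure (bvn r) A \<noteq> 0" using not_gr_zero by blast
  ultimately show ?thesis
    unfolding measure_def enn2real_positive_iff by blast
qed

definition lo :: "real \<Rightarrow> nat \<Rightarrow> real" where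
  "lo w i = (if i = 0 then - w - 1 else if i = 1 then - w else if i = 2 then 0 else w)"
definition hi :: "real \<Rightarrow> nat \<Rightarrow> real" where
  "hi w i = (if i = 0 then - w else if i = 1 then 0 else if i = 2 then w else w + 1)"

lemma Pcell_pos:
  assumes w: "0 < w" and r: "\<bar>r\<bar> < 1" and ij: "i \<le> 3" "j \<le> 3"
  shows "0 < Pcell i j r w"
  unfolding Pcell_def2
proof (rule bvn_pos[OF r Cset_sets])
  show "lo w i < hi w i" "lo w j < hi w j" using w by (auto simp: lo_def hi_def)
  show "{lo w i<..<hi w i} \<times> {lo w j<..<hi w j} \<subseteq> Cset w i j"
  proof
    fix z assume z: "z \<in> {lo w i<..<hi w i} \<times> {lo w j<..<hi w j}"
    have c: "code2 w t = n" if "n \<le> 3" "lo w n < t" "t < hi w n" for t n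
    proof -
      have "n = 0 \<or> n = 1 \<or> n = 2 \<or> n = 3" using that(1) by auto
      then show ?thesis
      proof (elim disjE)
        assume "n = 0" then show ?thesis using that w by (simp add: lo_def hi_def code2_def)
      next
        assume "n = 1" then show ?thesis using that w by (simp add: lo_def hi_def code2_def)
      next
        assume "n = 2" then show ?thesis using that w by (simp add: lo_def hi_def code2_def)
      next
        assume "n = 3" then show ?thesis using that w by (simp add: lo_def hi_def code2_def)
      qed
    qed
    show "z \<in> Cset w i j" using z c[OF ij(1)] c[OF ij(2)] by (auto simp: Cset_def)
  qed
qed

lemma code2_range: "code2 w t \<in> {0..3}"
  by (simp add: code2_def)

lemma ind_sum: "(\<Sum>i\<in>{0..3}. \<Sum>j\<in>{0..3}. indicator (Cset w i j) z) = (1::real)"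
proof -
  have "(\<Sum>i\<in>{0..3::nat}. \<Sum>j\<in>{0..3::nat}. indicator (Cset w i j) z)
      = (\<Sum>i\<in>{0..3::nat}. \<Sum>j\<in>{0..3::nat}. (if code2 w (fst z) = i then 1 else 0) * (if code2 w (snd z) = j then 1 else (0::real)))"
    by (intro sum.cong refl) (auto simp: indicator_def Cset_def)
  also have "\<dots> = (\<Sum>i\<in>{0..3::nat}. (if code2 w (fst z) = i then 1 else 0)) * (\<Sum>j\<in>{0..3::nat}. (if code2 w (snd z) = j then 1 else (0::real)))"
    by (rule sum_product[symmetric])
  also have "\<dots> = 1"
  proof -
    have s: "(\<Sum>i\<in>{0..3::nat}. if p = i then 1 else (0::real)) = 1" if "p \<in> {0..3}" for p
      using that by (simp add: sum.delta)
    show ?thesis by (simp add: s[OF code2_range])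
  qed
  finally show ?thesis .
qed

lemma Pcell_sum:
  assumes r: "\<bar>r\<bar> < 1"
  shows "(\<Sum>i\<in>{0..3}. \<Sum>j\<in>{0..3}. Pcell i j r w) = 1"
proof -
  interpret P: prob_space "bvn r" using prob_bvn[OF r] .
  have sp: "space (bvn r) = UNIV" by (simp add: bvn_def)
  have int: "integrable (bvn r) (indicator (Cset w i j) :: _ \<Rightarrow> real)" for i j
    by (rule integrable_real_indicator) (auto simp: less_top[symmetric] infinity_ennreal_def)
  have "(\<Sum>i\<in>{0..3}. \<Sum>j\<in>{0..3}. Pcell i j r w) = (\<Sum>i\<in>{0..3}. \<Sum>j\<in>{0..3}. (\<integral>z. indicator (Cset w i j) z \<partial>bvn r))"
    by (simp add: Pcell_def2 sp)
  also have "\<dots> = (\<integral>z. (\<Sum>i\<in>{0..3}. \<Sum>j\<in>{0..3}. indicator (Cset w i j) z) \<partial>bvn r)"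
    using int by (simp add: Bochner_Integration.integral_sum)
  also have "\<dots> = 1" by (simp add: ind_sum P.prob_space)
  finally show ?thesis .
qed

lemma cnt_eq: "real (cnt w k i j \<omega>) = (\<Sum>m<k. indicator (Cset w i j) (\<omega> m))"
proof -
  have se: "{m \<in> {..<k}. code2 w (fst (\<omega> m)) = i \<and> code2 w (snd (\<omega> m)) = j} = {m \<in> {..<k}. \<omega> m \<in> Cset w i j}"
    by (auto simp: Cset_def)
  have "real (cnt w k i j \<omega>) = (\<Sum>m\<in>{m \<in> {..<k}. \<omega> m \<in> Cset w i j}. 1)"
    by (simp only: cnt_def se real_of_card)
  also have "\<dots> = (\<Sum>m<k. if \<omega> m \<in> Cset w i j then 1 else 0)"
    by (rule sum.inter_filter) simp
  also have "\<dots> = (\<Sum>m<k. indicator (Cset w i j) (\<omega> m))"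
    by (intro sum.cong) (auto simp: indicator_def)
  finally show ?thesis .
qed

lemma comp_int:
  assumes r: "\<bar>r\<bar> < 1" and m: "m \<in> {..<k}"
  shows "(\<integral>\<omega>. indicator (Cset w i j) (\<omega> m) \<partial>PiM {..<k} (\<lambda>_. bvn r)) = Pcell i j r w"
    and "integrable (PiM {..<k} (\<lambda>_. bvn r)) (\<lambda>\<omega>. indicator (Cset w i j) (\<omega> m) :: real)"
proof -
  interpret P: prob_space "bvn r" using prob_bvn[OF r] .
  have sp: "space (bvn r) = UNIV" by (simp add: bvn_def)
  let ?M = "PiM {..<k} (\<lambda>_. bvn r)"
  have D: "distr ?M (bvn r) (\<lambda>\<omega>. \<omega> m) = bvn r"
    by (rule distr_PiM_component) (use prob_bvn[OF r] m in auto)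
  have meas: "(\<lambda>\<omega>. \<omega> m) \<in> measurable ?M (bvn r)"
    using m by (rule measurable_component_singleton)
  have im: "(indicator (Cset w i j) :: _ \<Rightarrow> real) \<in> borel_measurable (bvn r)"
    using Cset_sets[of w i j] by (intro borel_measurable_indicator) simp
  have int: "integrable (bvn r) (indicator (Cset w i j) :: _ \<Rightarrow> real)"
    by (rule integrable_real_indicator) (auto simp: less_top[symmetric] infinity_ennreal_def)
  have "(\<integral>\<omega>. indicator (Cset w i j) (\<omega> m) \<partial>?M) = integral\<^sup>L (distr ?M (bvn r) (\<lambda>\<omega>. \<omega> m)) (indicator (Cset w i j) :: _ \<Rightarrow> real)"
    by (rule integral_distr[OF meas im, symmetric])
  also have "\<dots> = integral\<^sup>L (bvn r) (indicator (Cset w i j))" using D by simp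
  also have "\<dots> = Pcell i j r w" by (simp add: Pcell_def2 sp)
  finally show "(\<integral>\<omega>. indicator (Cset w i j) (\<omega> m) \<partial>?M) = Pcell i j r w" .
  show "integrable ?M (\<lambda>\<omega>. indicator (Cset w i j) (\<omega> m) :: real)"
    using integrable_distr_eq[OF meas im] D int by simp
qed

lemma integrable_cnt:
  assumes r: "\<bar>r\<bar> < 1"
  shows "integrable (sample k r) (\<lambda>\<omega>. real (cnt w k i j \<omega>))"
  unfolding cnt_eq sample_def
  by (rule Bochner_Integration.integrable_sum[where f="\<lambda>m \<omega>. indicator (Cset w i j) (\<omega> m) :: real"]) (use comp_int(2)[OF r] in auto)

lemma expect_cnt:
  assumes r: "\<bar>r\<bar> < 1"
  shows "(\<integral>\<omega>. real (cnt w k i j \<omega>) \<partial>sample k r) = real k * Pcell i j r w"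
proof -
  let ?M = "PiM {..<k} (\<lambda>_. bvn r)"
  have "(\<integral>\<omega>. real (cnt w k i j \<omega>) \<partial>sample k r) = (\<integral>\<omega>. (\<Sum>m<k. indicator (Cset w i j) (\<omega> m)) \<partial>?M)"
    by (simp add: sample_def cnt_eq)
  also have "\<dots> = (\<Sum>m<k. (\<integral>\<omega>. indicator (Cset w i j) (\<omega> m) \<partial>?M))"
    by (rule Bochner_Integration.integral_sum[where f="\<lambda>m \<omega>. indicator (Cset w i j) (\<omega> m) :: real"]) (use comp_int(2)[OF r] in auto)
  also have "\<dots> = (\<Sum>m<k. Pcell i j r w)"
    by (intro sum.cong refl comp_int(1)[OF r])
  also have "\<dots> = real k * Pcell i j r w" by simp
  finally show ?thesis .
qed

lemma deriv_const_zero: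
  fixes f :: "real \<Rightarrow> real"
  assumes "(f has_real_derivative D) (at x)" "open S" "x \<in> S" "\<And>y. y \<in> S \<Longrightarrow> f y = c"
  shows "D = 0"
proof -
  have "((\<lambda>_. c) has_real_derivative D) (at x)"
    by (rule has_field_derivative_transform_within_open[OF assms(1-3)]) (use assms(4) in auto)
  then show ?thesis using DERIV_const DERIV_unique by blast
qed

lemma Pcell_deriv:
  assumes "\<bar>r\<bar> < 1"
  shows "((\<lambda>r. Pcell i j r w) has_real_derivative G1 (Cset w i j) r) (at r)"
  unfolding Pcell_def2 by (rule G_deriv[OF assms Cset_sets])

lemma open_I: "open {-1<..<(1::real)}" by simp
lemma in_I: "\<bar>r::real\<bar> < 1 \<longleftrightarrow> r \<in> {-1<..<1}" by (auto simp: abs_less_iff)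

lemma cell_pos_ident:
  assumes r: "\<bar>rho\<bar> < 1" and PX: "\<And>r. PX r = measure (bvn r) S" and S: "S \<in> sets borel"
    and rep: "\<And>r. \<bar>r\<bar> < 1 \<Longrightarrow> Pcell i j r w = measure (bvn r) S"
  shows "(G1 (Cset w i j) rho)\<^sup>2 / Pcell i j rho w = (deriv PX rho)\<^sup>2 / PX rho"
proof -
  have d1: "(PX has_real_derivative G1 S rho) (at rho)"
    unfolding PX[abs_def] by (rule G_deriv[OF r S])
  have "((\<lambda>r. Pcell i j r w) has_real_derivative G1 S rho) (at rho)"
    by (rule has_field_derivative_transform_within_open[OF d1 open_I]) (use r rep PX in \<open>auto simp: in_I\<close>)
  then have "G1 (Cset w i j) rho = G1 S rho" by (rule DERIV_unique[OF Pcell_deriv[OF r]])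
  moreover have "deriv PX rho = G1 S rho" using d1 by (rule DERIV_imp_deriv)
  ultimately show ?thesis using rep[OF r] PX by simp
qed

lemma cell_neg_ident:
  assumes r: "\<bar>rho\<bar> < 1" and PX: "\<And>r. PX r = measure (bvn r) S" and S: "S \<in> sets borel"
    and rep: "\<And>r. \<bar>r\<bar> < 1 \<Longrightarrow> Pcell i j r w = measure (bvn (- r)) S"
  shows "(G1 (Cset w i j) rho)\<^sup>2 / Pcell i j rho w = (deriv PX (- rho))\<^sup>2 / PX (- rho)"
proof -
  have r': "\<bar>- rho\<bar> < 1" using r by simp
  have d1: "(PX has_real_derivative G1 S (- rho)) (at (- rho))"
    unfolding PX[abs_def] by (rule G_deriv[OF r' S])
  have d2: "((\<lambda>r. PX (- r)) has_real_derivative G1 S (- rho) * (- 1)) (at rho)"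
  proof -
    have dm: "((\<lambda>r::real. - r) has_real_derivative - 1) (at rho)" by (auto intro!: derivative_eq_intros)
    show ?thesis using DERIV_chain2[of PX _ "\<lambda>r. - r", OF d1 dm] by simp
  qed
  have "((\<lambda>r. Pcell i j r w) has_real_derivative G1 S (- rho) * (- 1)) (at rho)"
    by (rule has_field_derivative_transform_within_open[OF d2 open_I]) (use r rep PX in \<open>auto simp: in_I\<close>)
  then have "G1 (Cset w i j) rho = G1 S (- rho) * (- 1)" by (rule DERIV_unique[OF Pcell_deriv[OF r]])
  moreover have "deriv PX (- rho) = G1 S (- rho)" using d1 by (rule DERIV_imp_deriv)
  ultimately show ?thesis using rep[OF r] PX by simp
qed

theorem theorem1:
  fixes w rho :: real and k :: nat
  assumes "w > 0" and "-1 < rho" and "rho < 1"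
  shows "fisher2 k rho w = 2 * real k *
     ( (deriv (\<lambda>r. P22 r w) rho)\<^sup>2 / P22 rho w
     + 2 * (deriv (\<lambda>r. P23 r w) rho)\<^sup>2 / P23 rho w
     + (deriv (\<lambda>r. P33 r w) rho)\<^sup>2 / P33 rho w
     + (deriv (\<lambda>r. P22 r w) (-rho))\<^sup>2 / P22 (-rho) w
     + 2 * (deriv (\<lambda>r. P23 r w) (-rho))\<^sup>2 / P23 (-rho) w
     + (deriv (\<lambda>r. P33 r w) (-rho))\<^sup>2 / P33 (-rho) w )"
proof -
  have w: "0 < w" using assms by simp
  have r: "\<bar>rho\<bar> < 1" using assms by (simp add: abs_less_iff)
  let ?I = "{0..3::nat}"
  have pos: "0 < Pcell i j r w" if "\<bar>r\<bar> < 1" "i \<in> ?I" "j \<in> ?I" for i j r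
    using Pcell_pos[OF w that(1)] that(2,3) by auto
  have dsum: "((\<lambda>r. \<Sum>i\<in>?I. \<Sum>j\<in>?I. Pcell i j r w) has_real_derivative (\<Sum>i\<in>?I. \<Sum>j\<in>?I. G1 (Cset w i j) r)) (at r)"
    if "\<bar>r\<bar> < 1" for r
    by (intro DERIV_sum Pcell_deriv that)
  have S1: "(\<Sum>i\<in>?I. \<Sum>j\<in>?I. G1 (Cset w i j) r) = 0" if "\<bar>r\<bar> < 1" for r
    by (rule deriv_const_zero[OF dsum[OF that] open_I, of 1]) (use that Pcell_sum in \<open>auto simp: in_I\<close>)
  have dsum1: "((\<lambda>r. \<Sum>i\<in>?I. \<Sum>j\<in>?I. G1 (Cset w i j) r) has_real_derivative (\<Sum>i\<in>?I. \<Sum>j\<in>?I. G2 (Cset w i j) rho)) (at rho)"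
    by (intro DERIV_sum G1_deriv[OF r Cset_sets])
  have S2: "(\<Sum>i\<in>?I. \<Sum>j\<in>?I. G2 (Cset w i j) rho) = 0"
    by (rule deriv_const_zero[OF dsum1 open_I, of 0]) (use r S1 in \<open>auto simp: in_I\<close>)
  define L1 where "L1 \<omega> r = (\<Sum>i\<in>?I. \<Sum>j\<in>?I. real (cnt w k i j \<omega>) * (G1 (Cset w i j) r / Pcell i j r w))" for \<omega> r
  define D where "D i j = (G2 (Cset w i j) rho * Pcell i j rho w - G1 (Cset w i j) rho * G1 (Cset w i j) rho)
      / (Pcell i j rho w * Pcell i j rho w)" for i j
  have dlog: "(loglik w k \<omega> has_real_derivative L1 \<omega> r) (at r)" if rr: "\<bar>r\<bar> < 1" for \<omega> r
  proof -
    have "((\<lambda>r. ln (Pcell i j r w)) has_real_derivative G1 (Cset w i j) r / Pcell i j r w) (at r)"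
      if "i \<in> ?I" "j \<in> ?I" for i j
      using DERIV_chain2[OF DERIV_ln_divide[OF pos[OF rr that]] Pcell_deriv[OF rr]] by simp
    then show ?thesis unfolding loglik_def[abs_def] L1_def
      by (intro DERIV_sum DERIV_cmult) auto
  qed
  have dL1: "(L1 \<omega> has_real_derivative (\<Sum>i\<in>?I. \<Sum>j\<in>?I. real (cnt w k i j \<omega>) * D i j)) (at rho)" for \<omega>
  proof -
    have "((\<lambda>r. G1 (Cset w i j) r / Pcell i j r w) has_real_derivative D i j) (at rho)"
      if "i \<in> ?I" "j \<in> ?I" for i j
      unfolding D_def by (rule DERIV_divide[OF G1_deriv[OF r Cset_sets] Pcell_deriv[OF r]]) (use pos[OF r that] in simp)
    then show ?thesis unfolding L1_def[abs_def]
      by (intro DERIV_sum DERIV_cmult) auto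
  qed
  have dd: "deriv (deriv (loglik w k \<omega>)) rho = (\<Sum>i\<in>?I. \<Sum>j\<in>?I. real (cnt w k i j \<omega>) * D i j)" for \<omega>
  proof -
    have "eventually (\<lambda>r. r \<in> {-1<..<1}) (nhds rho)"
      by (rule eventually_nhds_in_open[OF open_I]) (use r in \<open>auto simp: abs_less_iff\<close>)
    then have ev: "eventually (\<lambda>r. deriv (loglik w k \<omega>) r = L1 \<omega> r) (nhds rho)"
    proof eventually_elim
      case (elim r)
      then have "\<bar>r\<bar> < 1" by (auto simp: abs_less_iff)
      then show ?case by (rule DERIV_imp_deriv[OF dlog])
    qed
    have "deriv (deriv (loglik w k \<omega>)) rho = deriv (L1 \<omega>) rho" by (rule deriv_cong_ev[OF ev refl])
    also have "\<dots> = (\<Sum>i\<in>?I. \<Sum>j\<in>?I. real (cnt w k i j \<omega>) * D i j)" by (rule DERIV_imp_deriv[OF dL1])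
    finally show ?thesis .
  qed
  have int: "(\<integral>\<omega>. (\<Sum>i\<in>?I. \<Sum>j\<in>?I. real (cnt w k i j \<omega>) * D i j) \<partial>sample k rho)
      = (\<Sum>i\<in>?I. \<Sum>j\<in>?I. real k * Pcell i j rho w * D i j)"
    using integrable_cnt[OF r] by (simp add: expect_cnt[OF r])
  define T where "T i j = (G1 (Cset w i j) rho)\<^sup>2 / Pcell i j rho w" for i j
  have trm: "- (real k * Pcell i j rho w * D i j) = real k * T i j - real k * G2 (Cset w i j) rho"
    if "i \<in> ?I" "j \<in> ?I" for i j
    using pos[OF r that] by (simp add: D_def T_def field_simps power2_eq_square)
  have F: "fisher2 k rho w = real k * (\<Sum>i\<in>?I. \<Sum>j\<in>?I. T i j)"
  proof -
    have "fisher2 k rho w = - (\<Sum>i\<in>?I. \<Sum>j\<in>?I. real k * Pcell i j rho w * D i j)"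
      unfolding fisher2_def dd int ..
    also have "\<dots> = (\<Sum>i\<in>?I. \<Sum>j\<in>?I. - (real k * Pcell i j rho w * D i j))"
      by (simp add: sum_negf)
    also have "\<dots> = (\<Sum>i\<in>?I. \<Sum>j\<in>?I. real k * T i j - real k * G2 (Cset w i j) rho)"
      by (intro sum.cong refl trm)
    also have "\<dots> = real k * (\<Sum>i\<in>?I. \<Sum>j\<in>?I. T i j) - real k * (\<Sum>i\<in>?I. \<Sum>j\<in>?I. G2 (Cset w i j) rho)"
      by (simp add: sum_subtractf sum_distrib_left)
    also have "\<dots> = real k * (\<Sum>i\<in>?I. \<Sum>j\<in>?I. T i j)" by (simp add: S2)
    finally show ?thesis .
  qed
  note C = cells[OF w] and PD = P_defs[OF w] and CS = Cset_sets
  have T22: "T 2 2 = (deriv (\<lambda>r. P22 r w) rho)\<^sup>2 / P22 rho w" unfolding T_def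
    by (rule cell_pos_ident[where PX="\<lambda>r. P22 r w", OF r PD(1) CS C(1)])
  have T11: "T 1 1 = (deriv (\<lambda>r. P22 r w) rho)\<^sup>2 / P22 rho w" unfolding T_def
    by (rule cell_pos_ident[where PX="\<lambda>r. P22 r w", OF r PD(1) CS C(2)])
  have T32: "T 3 2 = (deriv (\<lambda>r. P23 r w) rho)\<^sup>2 / P23 rho w" unfolding T_def
    by (rule cell_pos_ident[where PX="\<lambda>r. P23 r w", OF r PD(2) CS C(3)])
  have T23: "T 2 3 = (deriv (\<lambda>r. P23 r w) rho)\<^sup>2 / P23 rho w" unfolding T_def
    by (rule cell_pos_ident[where PX="\<lambda>r. P23 r w", OF r PD(2) CS C(4)])
  have T01: "T 0 1 = (deriv (\<lambda>r. P23 r w) rho)\<^sup>2 / P23 rho w" unfolding T_def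
    by (rule cell_pos_ident[where PX="\<lambda>r. P23 r w", OF r PD(2) CS C(5)])
  have T10: "T 1 0 = (deriv (\<lambda>r. P23 r w) rho)\<^sup>2 / P23 rho w" unfolding T_def
    by (rule cell_pos_ident[where PX="\<lambda>r. P23 r w", OF r PD(2) CS C(6)])
  have T33: "T 3 3 = (deriv (\<lambda>r. P33 r w) rho)\<^sup>2 / P33 rho w" unfolding T_def
    by (rule cell_pos_ident[where PX="\<lambda>r. P33 r w", OF r PD(3) CS C(7)])
  have T00: "T 0 0 = (deriv (\<lambda>r. P33 r w) rho)\<^sup>2 / P33 rho w" unfolding T_def
    by (rule cell_pos_ident[where PX="\<lambda>r. P33 r w", OF r PD(3) CS C(8)])
  have T12: "T 1 2 = (deriv (\<lambda>r. P22 r w) (- rho))\<^sup>2 / P22 (- rho) w" unfolding T_def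
    by (rule cell_neg_ident[where PX="\<lambda>r. P22 r w", OF r PD(1) CS C(9)])
  have T21: "T 2 1 = (deriv (\<lambda>r. P22 r w) (- rho))\<^sup>2 / P22 (- rho) w" unfolding T_def
    by (rule cell_neg_ident[where PX="\<lambda>r. P22 r w", OF r PD(1) CS C(10)])
  have T03: "T 0 3 = (deriv (\<lambda>r. P33 r w) (- rho))\<^sup>2 / P33 (- rho) w" unfolding T_def
    by (rule cell_neg_ident[where PX="\<lambda>r. P33 r w", OF r PD(3) CS C(11)])
  have T30: "T 3 0 = (deriv (\<lambda>r. P33 r w) (- rho))\<^sup>2 / P33 (- rho) w" unfolding T_def
    by (rule cell_neg_ident[where PX="\<lambda>r. P33 r w", OF r PD(3) CS C(12)])
  have T02: "T 0 2 = (deriv (\<lambda>r. P23 r w) (- rho))\<^sup>2 / P23 (- rho) w" unfolding T_def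
    by (rule cell_neg_ident[where PX="\<lambda>r. P23 r w", OF r PD(2) CS C(13)])
  have T20: "T 2 0 = (deriv (\<lambda>r. P23 r w) (- rho))\<^sup>2 / P23 (- rho) w" unfolding T_def
    by (rule cell_neg_ident[where PX="\<lambda>r. P23 r w", OF r PD(2) CS C(14)])
  have T31: "T 3 1 = (deriv (\<lambda>r. P23 r w) (- rho))\<^sup>2 / P23 (- rho) w" unfolding T_def
    by (rule cell_neg_ident[where PX="\<lambda>r. P23 r w", OF r PD(2) CS C(15)])
  have T13: "T 1 3 = (deriv (\<lambda>r. P23 r w) (- rho))\<^sup>2 / P23 (- rho) w" unfolding T_def
    by (rule cell_neg_ident[where PX="\<lambda>r. P23 r w", OF r PD(2) CS C(16)])
  have I4: "?I = {0, 1, 2, 3}" by auto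
  have sum16: "(\<Sum>i\<in>?I. \<Sum>j\<in>?I. T i j) = T 0 0 + T 0 1 + T 0 2 + T 0 3 + T 1 0 + T 1 1 + T 1 2 + T 1 3
      + T 2 0 + T 2 1 + T 2 2 + T 2 3 + T 3 0 + T 3 1 + T 3 2 + T 3 3"
    unfolding I4 by (simp add: algebra_simps)
  show ?thesis
    unfolding F sum16 T22 T11 T32 T23 T01 T10 T33 T00 T12 T21 T03 T30 T02 T20 T31 T13
    by (simp add: algebra_simps)
qed

end
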